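(* Consider the discrete-time linear system $x(k+1)=Ax(k)+Bu(k)$ with the polytopic constraint sets $\mathcal{X}$, $\mathcal{U}$, the gain $K$, the terminal set $\mathcal{X}_f$, the matrices $M$, $P$ and the barrier functions $B_x$, $B_u$, $B_f$ described in the context, and suppose conditions (A1)–(A5) of the context hold. Let the feasible set $\mathcal{X}_N$ (defined in the context) have nonempty interior. For $x\in\mathcal{X}_N^\circ$ let $\tilde{\mathbf u}^*(x)=(\tilde u_0^*(x),\dots,\tilde u_{N-1}^*(x))$ be the minimizer of the barrier function based problem $$\tilde J_N^*(x)=\min_{\mathbf u}\ \sum_{k=0}^{N-1}\big[\ell(x_k,u_k)+\varepsilon B_u(u_k)+\varepsilon B_x(x_k)\big]+x_N^\top P x_N+\varepsilon B_f(x_N)$$ subject to $x_0=x$, $x_{k+1}=Ax_k+Bu_k$ (each barrier term being $+\infty$ outside the interior of its domain). Then the feedback $u(k)=\tilde u_0^*(x(k))$ asymptotically stabilizes the origin of the system under strict satisfaction of all input and state constraints for every initial condition $x(0)\in\mathcal{X}_N^\circ$; i.e., for every $x(0)\in\mathcal{X}_N^\circ$ the closed-loop states and inputs remain strictly inside $\mathcal{X}$ and $\mathcal{U}$ for all $k\ge0$, and the origin is asymptotically stable for the closed loop with $\mathcal{X}_N^\circ$ contained in its region of attraction.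
   Context: System: $x(k+1)=Ax(k)+Bu(k)$, $A\in\mathbb{R}^{n\times n}$, $B\in\mathbb{R}^{n\times m}$, $(A,B)$ stabilizable. Constraint sets are (compact) polytopes $\mathcal{X}=\{x: C_xx\le d_x\}$, $\mathcal{U}=\{u: C_uu\le d_u\}$ with $C_x\in\mathbb{R}^{q_x\times n}$, $C_u\in\mathbb{R}^{q_u\times m}$, and $d_x\in\mathbb{R}^{q_x}$, $d_u\in\mathbb{R}^{q_u}$ having strictly positive entries; $C^i$ denotes the $i$-th row and $d^i$ the $i$-th entry; $S^\circ$, $\partial S$ denote interior and boundary. Stage cost $\ell(x,u)=x^\top Qx+u^\top Ru$ with $Q$ symmetric positive semidefinite, $R$ symmetric positive definite; horizon $N\in\mathbb{N}_{\ge1}$; barrier weight $\varepsilon>0$; predicted states $x_0=x$, $x_{k+1}=Ax_k+Bu_k$. Recentered logarithmic barriers: for a polytope $\{z: Cz\le d\}$ with $d>0$ entrywise, let $\bar B_i(z)=-\ln(-C^iz+d^i)$ and $\bar B=\sum_i\bar B_i$. The gradient recentered barrier is $\bar B(z)-\bar B(0)-\nabla\bar B(0)^\top z$; the weight recentered barrier is $\sum_i(1+w^i)(\bar B_i(z)-\bar B_i(0))$ with a vector $w\ge0$ chosen such that $\sum_i(1+w^i)\nabla\bar B_i(0)=0$. Conditions: $K\in\mathbb{R}^{m\times n}$ is a stabilizing gain ($A_K:=A+BK$ Schur); $\mathcal{X}_K:=\{x\in\mathcal{X}: Kx\in\mathcal{U}\}$ and $B_K(x):=B_x(x)+B_u(Kx)$.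 (A1) $B_x$ and $B_u$ are recentered (gradient or weight recentered) logarithmic barrier functions for $\mathcal{X}$ and $\mathcal{U}$. (A2) There is a symmetric positive semidefinite $M$ with $B_K(x)\le x^\top Mx$ for all $x\in\mathcal{N}$, where $\mathcal{N}\subset\mathcal{X}_K$ is convex and compact with $0\in\mathcal{N}^\circ$. (A3) $P$ is symmetric positive definite and solves $P=A_K^\top PA_K+K^\top RK+Q+\varepsilon M$. (A4) The terminal set $\mathcal{X}_f$ is convex and compact with $0\in\mathcal{X}_f$, $\mathcal{X}_f\subset\mathcal{N}\subset\mathcal{X}_K$, and $A_Kx\in\mathcal{X}_f$ for all $x\in\mathcal{X}_f$. (A5) $B_f:\mathcal{X}_f^\circ\to\mathbb{R}_{\ge0}$ is a recentered barrier function for $\mathcal{X}_f$ (convex, continuously differentiable, $B_f(0)=0$, $B_f(x)\to\infty$ as $x\to\partial\mathcal{X}_f$) and $B_f(A_Kx)-B_f(x)\le0$ for all $x\in\mathcal{X}_f^\circ$. Feasible set: $\mathcal{X}_N=\{x\in\mathcal{X}:\exists\,\mathbf u=(u_0,\dots,u_{N-1})$ with $u_k\in\mathcal{U}$, $x_k\in\mathcal{X}$ for $k=0,\dots,N-1$ and $x_N\in\mathcal{X}_f\}$, where $x_k$ are the predicted states from $x_0=x$. *)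

theory Defs
  imports "HOL-Analysis.Analysis"
begin

definition symmetric_mat :: "real^'n^'n \<Rightarrow> bool" where
  "symmetric_mat M \<longleftrightarrow> transpose M = M"

definition psd_mat :: "real^'n^'n \<Rightarrow> bool" where
  "psd_mat M \<longleftrightarrow> symmetric_mat M \<and> (\<forall>x. 0 \<le> x \<bullet> (M *v x))"

definition pd_mat :: "real^'n^'n \<Rightarrow> bool" where
  "pd_mat M \<longleftrightarrow> symmetric_mat M \<and> (\<forall>x. x \<noteq> 0 \<longrightarrow> 0 < x \<bullet> (M *v x))"

definition schur_stable :: "real^'n^'n \<Rightarrow> bool" where
  "schur_stable A \<longleftrightarrow>
     (\<forall>(lam::complex) (v::complex^'n). v \<noteq> 0 \<and> map_matrix complex_of_real A *v v = lam *s v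
        \<longrightarrow> cmod lam < 1)"

definition stabilizable :: "real^'n^'n \<Rightarrow> real^'m^'n \<Rightarrow> bool" where
  "stabilizable A B \<longleftrightarrow> (\<exists>K::real^'n^'m. schur_stable (A + B ** K))"

definition polytope_set :: "real^'n^'q \<Rightarrow> real^'q \<Rightarrow> (real^'n) set" where
  "polytope_set C d = {z. \<forall>i. (C *v z) $ i \<le> d $ i}"

definition grad :: "(real^'n \<Rightarrow> real) \<Rightarrow> real^'n \<Rightarrow> real^'n" where
  "grad f x = (THE D. GDERIV f x :> D)"

definition lbar_i :: "real^'n^'q \<Rightarrow> real^'q \<Rightarrow> 'q \<Rightarrow> real^'n \<Rightarrow> real" where
  "lbar_i C d i z = - ln (- (C *v z) $ i + d $ i)"

definition lbar :: "real^'n^'q::finite \<Rightarrow> real^'q \<Rightarrow> real^'n \<Rightarrow> real" where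
  "lbar C d z = (\<Sum>i\<in>UNIV. lbar_i C d i z)"

definition grad_recentered :: "real^'n^'q::finite \<Rightarrow> real^'q \<Rightarrow> real^'n \<Rightarrow> real" where
  "grad_recentered C d z = lbar C d z - lbar C d 0 - grad (lbar C d) 0 \<bullet> z"

definition weight_recentered ::
    "real^'n^'q::finite \<Rightarrow> real^'q \<Rightarrow> real^'q \<Rightarrow> real^'n \<Rightarrow> real" where
  "weight_recentered C d w z = (\<Sum>i\<in>UNIV. (1 + w $ i) * (lbar_i C d i z - lbar_i C d i 0))"

definition admissible_weight :: "real^'n^'q::finite \<Rightarrow> real^'q \<Rightarrow> real^'q \<Rightarrow> bool" where
  "admissible_weight C d w \<longleftrightarrow>
     (\<forall>i. 0 \<le> w $ i) \<and> (\<Sum>i\<in>UNIV. (1 + w $ i) *\<^sub>R grad (lbar_i C d i) 0) = 0"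

text \<open>Only the values on the interior matter (outside, the barrier is \<open>+\<infinity>\<close>, which is
  handled by requiring strict feasibility explicitly).\<close>
definition recentered_log_barrier ::
    "real^'n^'q::finite \<Rightarrow> real^'q \<Rightarrow> (real^'n \<Rightarrow> real) \<Rightarrow> bool" where
  "recentered_log_barrier C d B \<longleftrightarrow>
     (\<forall>z\<in>interior (polytope_set C d). B z = grad_recentered C d z) \<or>
     (\<exists>w. admissible_weight C d w \<and>
          (\<forall>z\<in>interior (polytope_set C d). B z = weight_recentered C d w z))"

definition recentered_barrier :: "(real^'n) set \<Rightarrow> (real^'n \<Rightarrow> real) \<Rightarrow> bool" where
  "recentered_barrier S Bf \<longleftrightarrow>
     0 \<in> interior S \<and>
     convex_on (interior S) Bf \<and>
     (\<forall>x\<in>interior S. \<exists>D. GDERIV Bf x :> D) \<and>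
     continuous_on (interior S) (grad Bf) \<and>
     (\<forall>x\<in>interior S. 0 \<le> Bf x) \<and>
     Bf 0 = 0 \<and>
     (\<forall>y\<in>frontier S. filterlim Bf at_top (at y within interior S))"

primrec pred_state ::
    "real^'n^'n \<Rightarrow> real^'m^'n \<Rightarrow> real^'n \<Rightarrow> (nat \<Rightarrow> real^'m) \<Rightarrow> nat \<Rightarrow> real^'n" where
  "pred_state A B x u 0 = x"
| "pred_state A B x u (Suc k) = A *v pred_state A B x u k + B *v u k"

definition feasible_set ::
    "real^'n^'n \<Rightarrow> real^'m^'n \<Rightarrow> (real^'n) set \<Rightarrow> (real^'m) set \<Rightarrow> (real^'n) set
     \<Rightarrow> nat \<Rightarrow> (real^'n) set" where
  "feasible_set A B X U Xf N =
     {x \<in> X. \<exists>u. (\<forall>k<N. u k \<in> U \<and> pred_state A B x u k \<in> X) \<and> pred_state A B x u N \<in> Xf}"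

text \<open>Input sequences for which every barrier term is finite.\<close>
definition strictly_feasible ::
    "real^'n^'n \<Rightarrow> real^'m^'n \<Rightarrow> (real^'n) set \<Rightarrow> (real^'m) set \<Rightarrow> (real^'n) set
     \<Rightarrow> nat \<Rightarrow> real^'n \<Rightarrow> (nat \<Rightarrow> real^'m) \<Rightarrow> bool" where
  "strictly_feasible A B X U Xf N x u \<longleftrightarrow>
     (\<forall>k<N. u k \<in> interior U \<and> pred_state A B x u k \<in> interior X) \<and>
     pred_state A B x u N \<in> interior Xf"

definition barrier_cost ::
    "real^'n^'n \<Rightarrow> real^'m^'n \<Rightarrow> real^'n^'n \<Rightarrow> real^'m^'m \<Rightarrow> real^'n^'n \<Rightarrow> real
     \<Rightarrow> (real^'n \<Rightarrow> real) \<Rightarrow> (real^'m \<Rightarrow> real) \<Rightarrow> (real^'n \<Rightarrow> real)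
     \<Rightarrow> nat \<Rightarrow> real^'n \<Rightarrow> (nat \<Rightarrow> real^'m) \<Rightarrow> real" where
  "barrier_cost A B Q R P eps Bx Bu Bf N x u =
     (\<Sum>k<N. let xk = pred_state A B x u k in
        xk \<bullet> (Q *v xk) + u k \<bullet> (R *v u k) + eps * Bu (u k) + eps * Bx xk)
     + pred_state A B x u N \<bullet> (P *v pred_state A B x u N) + eps * Bf (pred_state A B x u N)"

text \<open>\<open>u\<close> minimizes the barrier based problem at \<open>x\<close>: the cost is \<open>+\<infinity>\<close> unless
  the input sequence is strictly feasible, so a minimizer is a strictly feasible
  sequence whose cost is no larger than that of any other strictly feasible sequence.\<close>
definition is_barrier_minimizer where
  "is_barrier_minimizer A B X U Xf Q R P eps Bx Bu Bf N x u \<longleftrightarrow>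
     strictly_feasible A B X U Xf N x u \<and>
     (\<forall>v. strictly_feasible A B X U Xf N x v \<longrightarrow>
        barrier_cost A B Q R P eps Bx Bu Bf N x u \<le> barrier_cost A B Q R P eps Bx Bu Bf N x v)"

definition asymptotically_stable_on :: "('a::real_normed_vector \<Rightarrow> 'a) \<Rightarrow> 'a set \<Rightarrow> bool" where
  "asymptotically_stable_on f D \<longleftrightarrow>
     0 \<in> D \<and> f 0 = 0 \<and>
     (\<forall>e>0. \<exists>\<delta>>0. \<forall>x\<in>D. norm x < \<delta> \<longrightarrow> (\<forall>k. norm ((f ^^ k) x) < e)) \<and>
     (\<forall>x\<in>D. (\<lambda>k. (f ^^ k) x) \<longlonglongrightarrow> 0)"

end

theory Submission
  imports Defs
begin


lemma mvec_nth: "(C *v z) $ i = C $ i \<bullet> z"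
  by (simp add: matrix_vector_mult_def inner_vec_def mult.commute)

lemma interior_polytope:
  fixes C :: "real^'n^'q::finite"
  assumes d: "\<forall>i. 0 < d $ i"
  shows "interior (polytope_set C d) = {z. \<forall>i. (C *v z) $ i < d $ i}"
proof
  show "{z. \<forall>i. (C *v z) $ i < d $ i} \<subseteq> interior (polytope_set C d)"
  proof (rule interior_maximal)
    show "{z. \<forall>i. (C *v z) $ i < d $ i} \<subseteq> polytope_set C d"
      by (auto simp: polytope_set_def less_imp_le)
    have "{z. \<forall>i. (C *v z) $ i < d $ i} = (\<Inter>i\<in>UNIV. {z. C $ i \<bullet> z < d $ i})"
      by (auto simp: mvec_nth)
    moreover have "open (\<Inter>i\<in>UNIV. {z. C $ i \<bullet> z < d $ i})"
      by (intro open_INT ballI open_halfspace_lt) simp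
    ultimately show "open {z. \<forall>i. (C *v z) $ i < d $ i}" by simp
  qed
next
  show "interior (polytope_set C d) \<subseteq> {z. \<forall>i. (C *v z) $ i < d $ i}"
  proof (clarify, rule ccontr)
    fix z i assume zi: "z \<in> interior (polytope_set C d)" and nl: "\<not> (C *v z) $ i < d $ i"
    obtain e where e: "e > 0" "ball z e \<subseteq> polytope_set C d"
      using zi by (meson mem_interior)
    define r where "r = C $ i"
    have zP: "z \<in> polytope_set C d" using zi interior_subset by blast
    have rz: "r \<bullet> z \<ge> d $ i" using nl by (simp add: mvec_nth r_def)
    have "r \<noteq> 0" using rz d by (metis inner_zero_left not_le)
    then have nr: "norm r > 0" by simp
    define y where "y = z + (e / (2 * norm r)) *\<^sub>R r"
    have "dist z y = e / 2" using nr e by (simp add: y_def dist_norm)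
    then have "y \<in> polytope_set C d" using e by auto
    then have "r \<bullet> y \<le> d $ i" by (simp add: polytope_set_def mvec_nth r_def)
    moreover have "r \<bullet> y = r \<bullet> z + (e / (2 * norm r)) * (r \<bullet> r)"
      by (simp add: y_def inner_add_right)
    moreover have "(e / (2 * norm r)) * (r \<bullet> r) > 0"
      using nr e \<open>r \<noteq> 0\<close> by simp
    ultimately show False using rz by linarith
  qed
qed

definition psi :: "real \<Rightarrow> real" where "psi t = - ln (1 - t) - t"

lemma psi_nonneg: "t < 1 \<Longrightarrow> 0 \<le> psi t"
  using ln_le_minus_one[of "1 - t"] by (simp add: psi_def)

lemma ln_strict: fixes x :: real assumes "0 < x" "x \<noteq> 1" shows "ln x < x - 1"
proof -
  have s: "sqrt x > 0" "sqrt x \<noteq> 1" using assms by auto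
  have "ln x = 2 * ln (sqrt x)" using assms by (simp add: ln_sqrt)
  also have "\<dots> \<le> 2 * (sqrt x - 1)" using ln_le_minus_one[OF s(1)] by simp
  also have "\<dots> < x - 1"
  proof -
    have "(sqrt x - 1)^2 > 0" using s by simp
    then show ?thesis using assms by (simp add: power2_eq_square algebra_simps)
  qed
  finally show ?thesis .
qed

lemma psi_pos: "t < 1 \<Longrightarrow> t \<noteq> 0 \<Longrightarrow> 0 < psi t"
  using ln_strict[of "1 - t"] by (simp add: psi_def)

lemma psi_scale: assumes "t < 1" "0 \<le> s" "s \<le> 1" shows "psi (s * t) \<le> s * psi t"
proof -
  have H: "\<forall>x\<in>{0<..}. \<forall>y\<in>{0<..}. \<forall>u\<ge>0. \<forall>v\<ge>0. u + v = 1 \<longrightarrow> u * ln x + v * ln y \<le> ln (u * x + v * (y::real))"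
    using ln_concave by (simp add: concave_on_iff)
  have "(1 - s) * ln 1 + s * ln (1 - t) \<le> ln ((1 - s) * 1 + s * (1 - t))"
    using H[rule_format, of 1 "1 - t" "1 - s" s] assms by simp
  then have "s * ln (1 - t) \<le> ln (1 - s * t)" by (simp add: algebra_simps)
  then show ?thesis by (simp add: psi_def algebra_simps)
qed

lemma psi_lower: "t < 1 \<Longrightarrow> - ln (1 - t) - 1 \<le> psi t"
  by (simp add: psi_def)

lemma continuous_on_psi: "continuous_on {..<1} psi"
  unfolding psi_def by (intro continuous_intros) auto

lemma grad_eqI: assumes "GDERIV f x :> D" shows "grad f x = D"
  unfolding grad_def
proof (rule the_equality)
  show "GDERIV f x :> D" by fact
next
  fix D' assume "GDERIV f x :> D'"
  then have "(\<lambda>h. h \<bullet> D') = (\<lambda>h. h \<bullet> D)"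
    using assms has_derivative_unique unfolding gderiv_def by blast
  then have "(D' - D) \<bullet> D' = (D' - D) \<bullet> D" by meson
  then have "(D' - D) \<bullet> (D' - D) = 0" by (simp add: inner_diff_right)
  then show "D' = D" by simp
qed

lemma gderiv_lbar_i:
  fixes C :: "real^'n^'q::finite"
  assumes "0 < d $ i"
  shows "GDERIV (lbar_i C d i) 0 :> (1 / d $ i) *\<^sub>R C $ i"
proof -
  have eq: "lbar_i C d i = (\<lambda>z. - ln (- (C $ i \<bullet> z) + d $ i))"
    by (auto simp: lbar_i_def mvec_nth)
  have g: "GDERIV (\<lambda>z. - (C $ i \<bullet> z) + d $ i) 0 :> - C $ i"
    unfolding gderiv_def
    by (rule has_derivative_eq_rhs, (rule derivative_intros)+) (auto simp: inner_commute)
  have f: "DERIV (\<lambda>y. - ln y) (- (C $ i \<bullet> 0) + d $ i) :> - (1 / d $ i)"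
    using assms by (auto intro!: derivative_eq_intros)
  show ?thesis unfolding eq
    using GDERIV_DERIV_compose[OF g f] by simp
qed

lemma grad_lbar_i:
  fixes C :: "real^'n^'q::finite"
  assumes "0 < d $ i"
  shows "grad (lbar_i C d i) 0 = (1 / d $ i) *\<^sub>R C $ i"
  using grad_eqI[OF gderiv_lbar_i[OF assms]] .

lemma grad_lbar:
  fixes C :: "real^'n^'q::finite"
  assumes "\<forall>i. 0 < d $ i"
  shows "grad (lbar C d) 0 = (\<Sum>i\<in>UNIV. (1 / d $ i) *\<^sub>R C $ i)"
proof (rule grad_eqI)
  have eq: "lbar C d = (\<lambda>z. \<Sum>i\<in>UNIV. lbar_i C d i z)" by (auto simp: lbar_def)
  have "\<And>i. ((lbar_i C d i) has_derivative (\<lambda>h. h \<bullet> ((1 / d $ i) *\<^sub>R C $ i))) (at 0)"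
    using gderiv_lbar_i assms unfolding gderiv_def by blast
  then have "((\<lambda>z. \<Sum>i\<in>UNIV. lbar_i C d i z) has_derivative (\<lambda>h. \<Sum>i\<in>UNIV. h \<bullet> ((1 / d $ i) *\<^sub>R C $ i))) (at 0)"
    by (intro has_derivative_sum) auto
  then show "GDERIV (lbar C d) 0 :> (\<Sum>i\<in>UNIV. (1 / d $ i) *\<^sub>R C $ i)"
    unfolding eq gderiv_def by (simp add: inner_sum_right)
qed

lemma lbar_i_diff:
  fixes C :: "real^'n^'q::finite"
  assumes "0 < d $ i" "(C *v z) $ i < d $ i"
  shows "lbar_i C d i z - lbar_i C d i 0 = - ln (1 - (C *v z) $ i / d $ i)"
proof -
  have "1 - (C *v z) $ i / d $ i = (d $ i - (C *v z) $ i) / d $ i"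
    using assms by (simp add: field_simps)
  then have "ln (1 - (C *v z) $ i / d $ i) = ln (d $ i - (C *v z) $ i) - ln (d $ i)"
    using assms by (simp add: ln_div)
  then show ?thesis by (simp add: lbar_i_def)
qed

lemma barrier_repr:
  fixes C :: "real^'n^'q::finite"
  assumes B: "recentered_log_barrier C d B" and d: "\<forall>i. 0 < d $ i"
  shows "\<exists>c. (\<forall>i. 1 \<le> c i) \<and> (\<forall>z\<in>interior (polytope_set C d).
            B z = (\<Sum>i\<in>UNIV. c i * psi ((C *v z) $ i / d $ i)))"
proof -
  have int: "interior (polytope_set C d) = {z. \<forall>i. (C *v z) $ i < d $ i}"
    using interior_polytope[OF d] .
  have gi: "((1 / d $ i) *\<^sub>R C $ i) \<bullet> z = (C *v z) $ i / d $ i" for i z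
    by (simp add: mvec_nth)
  from B[unfolded recentered_log_barrier_def] show ?thesis
  proof
    assume H: "\<forall>z\<in>interior (polytope_set C d). B z = grad_recentered C d z"
    show ?thesis
    proof (intro exI[of _ "\<lambda>i. 1"] conjI allI ballI)
      fix z assume z: "z \<in> interior (polytope_set C d)"
      then have zs: "\<forall>i. (C *v z) $ i < d $ i" using int by auto
      have "B z = (\<Sum>i\<in>UNIV. lbar_i C d i z - lbar_i C d i 0) - (\<Sum>i\<in>UNIV. ((1 / d $ i) *\<^sub>R C $ i) \<bullet> z)"
        using H z by (simp add: grad_recentered_def grad_lbar[OF d] lbar_def sum_subtractf inner_sum_left)
      also have "\<dots> = (\<Sum>i\<in>UNIV. - ln (1 - (C *v z) $ i / d $ i) - (C *v z) $ i / d $ i)"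
      proof -
        have "(\<Sum>i\<in>UNIV. lbar_i C d i z - lbar_i C d i 0) = (\<Sum>i\<in>UNIV. - ln (1 - (C *v z) $ i / d $ i))"
          by (rule sum.cong) (auto simp: lbar_i_diff d zs)
        moreover have "(\<Sum>i\<in>UNIV. ((1 / d $ i) *\<^sub>R C $ i) \<bullet> z) = (\<Sum>i\<in>UNIV. (C *v z) $ i / d $ i)"
          by (simp only: gi)
        ultimately show ?thesis by (simp add: sum_subtractf)
      qed
      also have "\<dots> = (\<Sum>i\<in>UNIV. 1 * psi ((C *v z) $ i / d $ i))"
        by (simp add: psi_def)
      finally show "B z = (\<Sum>i\<in>UNIV. 1 * psi ((C *v z) $ i / d $ i))" .
    qed simp
  next
    assume "\<exists>w. admissible_weight C d w \<and>
          (\<forall>z\<in>interior (polytope_set C d). B z = weight_recentered C d w z)"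
    then obtain w where w: "admissible_weight C d w"
      and H: "\<forall>z\<in>interior (polytope_set C d). B z = weight_recentered C d w z" by blast
    have w0: "\<forall>i. 0 \<le> w $ i" and ws: "(\<Sum>i\<in>UNIV. (1 + w $ i) *\<^sub>R ((1 / d $ i) *\<^sub>R C $ i)) = 0"
      using w d by (auto simp: admissible_weight_def grad_lbar_i)
    show ?thesis
    proof (intro exI[of _ "\<lambda>i. 1 + w $ i"] conjI allI ballI)
      fix i show "1 \<le> 1 + w $ i" using w0 by simp
    next
      fix z assume z: "z \<in> interior (polytope_set C d)"
      then have zs: "\<forall>i. (C *v z) $ i < d $ i" using int by auto
      have z0: "(\<Sum>i\<in>UNIV. (1 + w $ i) * ((C *v z) $ i / d $ i)) = 0"
      proof -
        have "(\<Sum>i\<in>UNIV. (1 + w $ i) *\<^sub>R ((1 / d $ i) *\<^sub>R C $ i)) \<bullet> z = 0" using ws by simp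
        then show ?thesis by (simp add: inner_sum_left mvec_nth)
      qed
      have "B z = (\<Sum>i\<in>UNIV. (1 + w $ i) * (- ln (1 - (C *v z) $ i / d $ i)))"
        using H z unfolding weight_recentered_def
        by (auto intro!: sum.cong simp: lbar_i_diff d zs)
      also have "\<dots> = (\<Sum>i\<in>UNIV. (1 + w $ i) * (- ln (1 - (C *v z) $ i / d $ i)))
                      - (\<Sum>i\<in>UNIV. (1 + w $ i) * ((C *v z) $ i / d $ i))" using z0 by simp
      also have "\<dots> = (\<Sum>i\<in>UNIV. (1 + w $ i) * psi ((C *v z) $ i / d $ i))"
        by (simp add: psi_def sum_subtractf[symmetric] algebra_simps)
      finally show "B z = (\<Sum>i\<in>UNIV. (1 + w $ i) * psi ((C *v z) $ i / d $ i))" .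
    qed
  qed
qed

definition pf :: "real^'n^'q::finite \<Rightarrow> real^'q \<Rightarrow> ('q \<Rightarrow> real) \<Rightarrow> real^'n \<Rightarrow> real" where
  "pf C d c z = (\<Sum>i\<in>UNIV. c i * psi ((C *v z) $ i / d $ i))"

lemma strict_t: fixes C :: "real^'n^'q::finite" shows "0 < d $ i \<Longrightarrow> (C *v z) $ i < d $ i \<Longrightarrow> (C *v z) $ i / d $ i < 1"
  using pos_divide_less_eq[of "d $ i" "(C *v z) $ i" 1] by simp

lemma pf_nonneg:
  assumes d: "\<forall>i. 0 < d $ i" and c: "\<forall>i. 1 \<le> c i" and z: "\<forall>i. (C *v z) $ i < d $ i"
  shows "0 \<le> pf C d c z"
  unfolding pf_def
proof (rule sum_nonneg)
  fix i have "0 \<le> psi ((C *v z) $ i / d $ i)" using psi_nonneg strict_t d z by blast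
  then show "0 \<le> c i * psi ((C *v z) $ i / d $ i)" using c[rule_format, of i] by simp
qed

lemma pf_continuous:
  assumes d: "\<forall>i. 0 < d $ i"
  shows "continuous_on {z. \<forall>i. (C *v z) $ i < d $ i} (pf C d c)"
proof -
  have "continuous_on {z. \<forall>i. (C *v z) $ i < d $ i} (\<lambda>z. psi ((C *v z) $ i / d $ i))" for i
  proof (rule continuous_on_compose2[OF continuous_on_psi])
    show "continuous_on {z. \<forall>i. (C *v z) $ i < d $ i} (\<lambda>z. (C *v z) $ i / d $ i)"
    proof -
      have dn: "\<forall>i. d $ i \<noteq> 0" using d by (metis less_irrefl)
      show ?thesis unfolding mvec_nth using dn by (intro continuous_intros) auto
    qed
    show "(\<lambda>z. (C *v z) $ i / d $ i) ` {z. \<forall>i. (C *v z) $ i < d $ i} \<subseteq> {..<1}"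
      using strict_t d by auto
  qed
  then show ?thesis unfolding pf_def[abs_def] by (intro continuous_intros)
qed

lemma pf_scale:
  assumes d: "\<forall>i. 0 < d $ i" and c: "\<forall>i. 1 \<le> c i" and z: "\<forall>i. (C *v z) $ i < d $ i"
    and s: "0 \<le> s" "s \<le> 1"
  shows "pf C d c (s *\<^sub>R z) \<le> s * pf C d c z"
  unfolding pf_def sum_distrib_left
proof (rule sum_mono)
  fix i
  have "psi (s * ((C *v z) $ i / d $ i)) \<le> s * psi ((C *v z) $ i / d $ i)"
    using psi_scale strict_t d z s by blast
  then have "c i * psi (s * ((C *v z) $ i / d $ i)) \<le> c i * (s * psi ((C *v z) $ i / d $ i))"
    using c[rule_format, of i] by (intro mult_left_mono) auto
  then show "c i * psi ((C *v s *\<^sub>R z) $ i / d $ i) \<le> s * (c i * psi ((C *v z) $ i / d $ i))"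
    by (simp add: mvec_nth algebra_simps)
qed

lemma pf_pos:
  fixes C :: "real^'n^'q::finite"
  assumes d: "\<forall>i. 0 < d $ i" and c: "\<forall>i. 1 \<le> c i" and z: "\<forall>i. (C *v z) $ i < d $ i"
    and bd: "bounded (polytope_set C d)" and nz: "z \<noteq> 0"
  shows "0 < pf C d c z"
proof -
  have "\<exists>i. (C *v z) $ i \<noteq> 0"
  proof (rule ccontr)
    assume "\<not> ?thesis"
    then have Cz: "\<forall>i. (C *v z) $ i = 0" by auto
    obtain b where b: "\<forall>x\<in>polytope_set C d. norm x \<le> b" using bd bounded_iff by blast
    define s where "s = (\<bar>b\<bar> + 1) / norm z"
    have "s *\<^sub>R z \<in> polytope_set C d"
      using Cz d by (auto simp: polytope_set_def mvec_nth less_imp_le)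
    moreover have "norm (s *\<^sub>R z) = \<bar>b\<bar> + 1" using nz by (simp add: s_def)
    ultimately show False using b by fastforce
  qed
  then obtain i where i: "(C *v z) $ i \<noteq> 0" by blast
  have p: "0 < psi ((C *v z) $ i / d $ i)"
    using psi_pos[OF strict_t] d z i by force
  have "0 < c i * psi ((C *v z) $ i / d $ i)"
    using p c[rule_format, of i] by simp
  also have "\<dots> \<le> pf C d c z"
    unfolding pf_def
  proof (rule member_le_sum)
    fix j show "0 \<le> c j * psi ((C *v z) $ j / d $ j)"
      using psi_nonneg[OF strict_t[of d j C z]] d z c[rule_format, of j] by simp
  qed auto
  finally show ?thesis .
qed

lemma pf_blowup:
  fixes C :: "real^'n^'q::finite"
  assumes d: "\<forall>i. 0 < d $ i" and c: "\<forall>i. 1 \<le> c i"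
    and zs: "\<forall>j. \<forall>i. (C *v zs j) $ i < d $ i" and lim: "zs \<longlonglongrightarrow> z" and zi: "d $ i \<le> (C *v z) $ i"
  shows "eventually (\<lambda>j. M \<le> pf C d c (zs j)) sequentially"
proof -
  have "(\<lambda>j. C $ i \<bullet> zs j) \<longlonglongrightarrow> C $ i \<bullet> z"
    by (intro tendsto_intros lim)
  then have tl: "(\<lambda>j. (C *v zs j) $ i) \<longlonglongrightarrow> (C *v z) $ i"
    by (simp add: mvec_nth)
  have "(C *v z) $ i \<le> d $ i"
    using zs by (intro LIMSEQ_le_const2[OF tl]) (auto simp: less_imp_le)
  then have zeq: "(C *v z) $ i = d $ i" using zi by simp
  define g where "g j = 1 - (C *v zs j) $ i / d $ i" for j
  have "g \<longlonglongrightarrow> 1 - (C *v z) $ i / d $ i"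
    unfolding g_def by (intro tendsto_diff tendsto_const tendsto_divide tl) (metis d less_irrefl)
  then have "g \<longlonglongrightarrow> 1 - d $ i / d $ i" using zeq by simp
  then have g0: "g \<longlonglongrightarrow> 0" using d by (metis diff_self divide_self less_irrefl)
  have gpos: "\<forall>j. 0 < g j" using strict_t d zs by (auto simp: g_def)
  have "filterlim g (at_right 0) sequentially"
    using g0 gpos by (intro tendsto_imp_filterlim_at_right) (auto intro!: always_eventually)
  then have "filterlim (\<lambda>j. ln (g j)) at_bot sequentially"
    using ln_at_0 filterlim_compose by blast
  then have "eventually (\<lambda>j. ln (g j) \<le> - (M + 1)) sequentially"
    by (simp add: filterlim_at_bot)
  then show ?thesis
  proof (rule eventually_mono)
    fix j assume lj: "ln (g j) \<le> - (M + 1)"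
    have "M \<le> - ln (1 - (C *v zs j) $ i / d $ i) - 1" using lj by (simp add: g_def)
    also have "\<dots> \<le> psi ((C *v zs j) $ i / d $ i)" using psi_lower[OF strict_t[of d i C "zs j"]] d zs by simp
    also have "\<dots> \<le> c i * psi ((C *v zs j) $ i / d $ i)"
    proof -
      have p: "0 \<le> psi ((C *v zs j) $ i / d $ i)" using psi_nonneg[OF strict_t[of d i C "zs j"]] d zs by simp
      show ?thesis using mult_right_mono[OF c[rule_format, of i] p] by simp
    qed
    also have "\<dots> \<le> pf C d c (zs j)"
      unfolding pf_def
    proof (rule member_le_sum)
      fix k show "0 \<le> c k * psi ((C *v zs j) $ k / d $ k)"
        using psi_nonneg[OF strict_t[of d k C "zs j"]] d zs c[rule_format, of k] by simp
    qed auto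
    finally show "M \<le> pf C d c (zs j)" .
  qed
qed

lemma psi0: "psi 0 = 0" by (simp add: psi_def)

locale lbarrier =
  fixes C :: "real^'n^'q::finite" and d :: "real^'q" and B :: "real^'n \<Rightarrow> real"
  assumes d: "\<forall>i. 0 < d $ i"
    and cpt: "compact (polytope_set C d)"
    and rb: "recentered_log_barrier C d B"
begin

definition "P = polytope_set C d"

lemma intP: "interior P = {z. \<forall>i. (C *v z) $ i < d $ i}"
  unfolding P_def using interior_polytope[OF d] .

lemma c_ex: "\<exists>c. (\<forall>i. 1 \<le> c i) \<and> (\<forall>z\<in>interior P. B z = pf C d c z)"
  using barrier_repr[OF rb d] unfolding pf_def P_def by blast

lemma zero_int: "0 \<in> interior P" using d by (simp add: intP)

lemma B0: "B 0 = 0"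
  using c_ex zero_int by (auto simp: pf_def psi0)

lemma B_nonneg: "z \<in> interior P \<Longrightarrow> 0 \<le> B z"
  using c_ex pf_nonneg[OF d] by (auto simp: intP)

lemma B_cont: "continuous_on (interior P) B"
proof -
  obtain c where c: "\<forall>z\<in>interior P. B z = pf C d c z" using c_ex by blast
  have "continuous_on (interior P) (pf C d c)" using pf_continuous[OF d] intP by simp
  then show ?thesis using continuous_on_eq c by metis
qed

lemma B_blowup:
  assumes zs: "\<forall>j. zs j \<in> interior P" and lim: "zs \<longlonglongrightarrow> z" and z: "z \<notin> interior P"
  shows "eventually (\<lambda>j. M \<le> B (zs j)) sequentially"
proof -
  obtain c where c1: "\<forall>i. 1 \<le> c i" and c: "\<forall>z\<in>interior P. B z = pf C d c z" using c_ex by blast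
  obtain i where i: "d $ i \<le> (C *v z) $ i" using z by (auto simp: intP not_less)
  have "eventually (\<lambda>j. M \<le> pf C d c (zs j)) sequentially"
    by (rule pf_blowup[OF d c1 _ lim i]) (use zs intP in auto)
  then show ?thesis using c zs by simp
qed

lemma scale_int: assumes "z \<in> interior P" "0 \<le> s" "s \<le> 1" shows "s *\<^sub>R z \<in> interior P"
proof -
  have "(C *v (s *\<^sub>R z)) $ i < d $ i" for i
  proof -
    have a: "(C *v z) $ i < d $ i" using assms intP by auto
    have "(C *v (s *\<^sub>R z)) $ i = s * (C *v z) $ i" by (simp add: mvec_nth)
    moreover have "s * (C *v z) $ i < d $ i"
    proof (cases "(C *v z) $ i \<ge> 0")
      case True
      then have "s * (C *v z) $ i \<le> (C *v z) $ i" using assms by (simp add: mult_left_le_one_le)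
      then show ?thesis using a by simp
    next
      case False
      then have "s * (C *v z) $ i \<le> 0" using assms by (simp add: mult_nonneg_nonpos)
      then show ?thesis using d by (meson le_less_trans)
    qed
    ultimately show ?thesis by simp
  qed
  then show ?thesis using intP by auto
qed

lemma B_scale: assumes "z \<in> interior P" "0 \<le> s" "s \<le> 1" shows "B (s *\<^sub>R z) \<le> s * B z"
proof -
  obtain c where c1: "\<forall>i. 1 \<le> c i" and c: "\<forall>z\<in>interior P. B z = pf C d c z" using c_ex by blast
  have zi: "\<forall>i. (C *v z) $ i < d $ i" using assms(1) intP by auto
  show ?thesis using pf_scale[OF d c1 zi assms(2,3)] c scale_int[OF assms] assms(1) by auto
qed

lemma B_pd: assumes e: "0 < e" shows "\<exists>m>0. \<forall>z\<in>interior P. e \<le> norm z \<longrightarrow> m \<le> B z"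
proof -
  obtain c where c1: "\<forall>i. 1 \<le> c i" and c: "\<forall>z\<in>interior P. B z = pf C d c z" using c_ex by blast
  obtain r0 where r0: "r0 > 0" "cball 0 r0 \<subseteq> interior P"
    using open_contains_cball zero_int open_interior by blast
  define r where "r = min e r0"
  have r: "r > 0" "r \<le> e" "sphere 0 r \<subseteq> interior P" using r0 e by (auto simp: r_def)
  have "continuous_on (sphere 0 r) B" using B_cont r(3) continuous_on_subset by blast
  moreover have "sphere (0::real^'n) r \<noteq> {}" using r by simp
  ultimately obtain w where w: "w \<in> sphere 0 r" "\<forall>y\<in>sphere 0 r. B w \<le> B y"
    using continuous_attains_inf[OF compact_sphere] by blast
  have "w \<noteq> 0" using w r by auto
  then have m: "B w > 0"
    using pf_pos[OF d c1 _ compact_imp_bounded[OF cpt]] c r(3) w intP by auto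
  show ?thesis
  proof (intro exI[of _ "B w"] conjI m ballI impI)
    fix z assume z: "z \<in> interior P" "e \<le> norm z"
    define s where "s = r / norm z"
    have nz: "norm z > 0" using z e by linarith
    have s: "0 \<le> s" "s \<le> 1" using r z nz by (auto simp: s_def)
    have "s *\<^sub>R z \<in> sphere 0 r" using nz r by (simp add: s_def)
    then have "B w \<le> B (s *\<^sub>R z)" using w by blast
    also have "\<dots> \<le> s * B z" using B_scale[OF z(1) s] .
    also have "\<dots> \<le> B z" using B_nonneg[OF z(1)] s by (simp add: mult_left_le_one_le)
    finally show "B w \<le> B z" .
  qed
qed

end



lemma quad_transpose:
  fixes G :: "real^'n^'m" and P :: "real^'m^'m"
  shows "y \<bullet> ((transpose G ** P ** G) *v y) = (G *v y) \<bullet> (P *v (G *v y))"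
proof -
  have "(transpose G ** P ** G) *v y = transpose G *v (P *v (G *v y))"
    by (simp add: matrix_vector_mul_assoc matrix_mul_assoc)
  also have "\<dots> = (P *v (G *v y)) v* G" by simp
  finally have "y \<bullet> ((transpose G ** P ** G) *v y) = ((P *v (G *v y)) v* G) \<bullet> y"
    by (simp add: inner_commute)
  also have "\<dots> = (G *v y) \<bullet> (P *v (G *v y))"
    using dot_lmul_matrix[of "P *v (G *v y)" G y] by (simp add: inner_commute)
  finally show ?thesis .
qed

lemma P_eq_quad:
  fixes AK P Q M :: "real^'n^'n" and K :: "real^'n^'m" and R :: "real^'m^'m"
  assumes "P = transpose AK ** P ** AK + transpose K ** R ** K + Q + eps *\<^sub>R M"
  shows "y \<bullet> (P *v y) = (AK *v y) \<bullet> (P *v (AK *v y)) + (K *v y) \<bullet> (R *v (K *v y)) + y \<bullet> (Q *v y) + eps * (y \<bullet> (M *v y))"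
proof -
  have "y \<bullet> (P *v y) = y \<bullet> ((transpose AK ** P ** AK) *v y) + y \<bullet> ((transpose K ** R ** K) *v y) + y \<bullet> (Q *v y) + y \<bullet> ((eps *\<^sub>R M) *v y)"
    by (subst assms) (simp add: matrix_vector_mult_add_rdistrib inner_add_right)
  also have "y \<bullet> ((eps *\<^sub>R M) *v y) = eps * (y \<bullet> (M *v y))"
    by (simp add: scaleR_matrix_vector_assoc[symmetric])
  finally show ?thesis by (simp add: quad_transpose)
qed

lemma convex_polytope: "convex (polytope_set C d)"
proof -
  have "polytope_set C d = (\<Inter>i. {z. C $ i \<bullet> z \<le> d $ i})"
    by (auto simp: polytope_set_def mvec_nth)
  then show ?thesis by (simp add: convex_INT convex_halfspace_le)
qed

lemma closed_polytope: "closed (polytope_set C d)"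
proof -
  have "polytope_set C d = (\<Inter>i. {z. C $ i \<bullet> z \<le> d $ i})"
    by (auto simp: polytope_set_def mvec_nth)
  then show ?thesis by (simp add: closed_INT closed_halfspace_le)
qed

lemma ps_cong: "(\<forall>j<k. u j = v j) \<Longrightarrow> pred_state A B x u k = pred_state A B x v k"
  by (induction k) auto

lemma ps_scale: "pred_state A B (c *\<^sub>R x) (\<lambda>k. c *\<^sub>R u k) k = c *\<^sub>R pred_state A B x u k"
  by (induction k) (auto simp: matrix_vector_mult_scaleR scaleR_add_right)

lemma ps_cont: "continuous_on UNIV (\<lambda>x. pred_state A B x u k)"
proof (induction k)
  case (Suc k)
  have "continuous_on UNIV (\<lambda>x. A *v pred_state A B x u k)"
    using continuous_on_compose2[OF matrix_vector_mult_linear_continuous_on[of UNIV A] Suc] by simp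
  then show ?case by (auto intro!: continuous_intros)
qed auto

locale mpc =
  fixes A :: "real^'n::finite^'n" and B :: "real^'m::finite^'n"
    and Cx :: "real^'n^'qx::finite" and dx :: "real^'qx"
    and Cu :: "real^'m^'qu::finite" and du :: "real^'qu"
    and Q :: "real^'n^'n" and R :: "real^'m^'m" and N :: nat and eps :: real
    and K :: "real^'n^'m" and M :: "real^'n^'n" and P :: "real^'n^'n"
    and Nset :: "(real^'n) set" and Xf :: "(real^'n) set"
    and Bx :: "real^'n \<Rightarrow> real" and Bu :: "real^'m \<Rightarrow> real" and Bf :: "real^'n \<Rightarrow> real"
  assumes dx_pos: "\<forall>i. 0 < dx $ i" and du_pos: "\<forall>i. 0 < du $ i"
    and X_compact: "compact (polytope_set Cx dx)" and U_compact: "compact (polytope_set Cu du)"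
    and Q_psd: "psd_mat Q" and R_pd: "pd_mat R"
    and N_ge1: "N \<ge> 1" and eps_pos: "eps > 0"
    and A1x: "recentered_log_barrier Cx dx Bx"
    and A1u: "recentered_log_barrier Cu du Bu"
    and A2_bound: "\<forall>x\<in>Nset. x \<in> interior (polytope_set Cx dx) \<and> K *v x \<in> interior (polytope_set Cu du) \<and>
                        Bx x + Bu (K *v x) \<le> x \<bullet> (M *v x)"
    and P_pd: "pd_mat P"
    and P_eq: "P = transpose (A + B ** K) ** P ** (A + B ** K) + transpose K ** R ** K + Q + eps *\<^sub>R M"
    and Xf_convex: "convex Xf" and Xf_compact: "compact Xf" and Xf_N: "Xf \<subseteq> Nset"
    and A5a: "recentered_barrier Xf Bf"
    and A5b: "\<forall>x\<in>interior Xf. (A + B ** K) *v x \<in> interior Xf \<and> Bf ((A + B ** K) *v x) - Bf x \<le> 0"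
begin

abbreviation "X \<equiv> polytope_set Cx dx"
abbreviation "U \<equiv> polytope_set Cu du"
abbreviation "AK \<equiv> A + B ** K"
abbreviation "XN \<equiv> feasible_set A B X U Xf N"
abbreviation "ps \<equiv> pred_state A B"
abbreviation "sf \<equiv> strictly_feasible A B X U Xf N"
abbreviation "J \<equiv> barrier_cost A B Q R P eps Bx Bu Bf N"

definition "stage y v = y \<bullet> (Q *v y) + v \<bullet> (R *v v) + eps * Bu v + eps * Bx y"
definition "Vf y = y \<bullet> (P *v y) + eps * Bf y"

interpretation bx: lbarrier Cx dx Bx using dx_pos X_compact A1x by unfold_locales
interpretation bu: lbarrier Cu du Bu using du_pos U_compact A1u by unfold_locales

lemma bxP: "bx.P = X" by (simp add: bx.P_def)
lemma buP: "bu.P = U" by (simp add: bu.P_def)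

lemma J_split: "J x u = (\<Sum>k<N. stage (ps x u k) (u k)) + Vf (ps x u N)"
  by (simp add: barrier_cost_def stage_def Vf_def Let_def)

lemma Bf_facts: "0 \<in> interior Xf" "\<And>x. x \<in> interior Xf \<Longrightarrow> 0 \<le> Bf x" "Bf 0 = 0"
  "\<And>y. y \<in> frontier Xf \<Longrightarrow> filterlim Bf at_top (at y within interior Xf)"
  using A5a by (auto simp: recentered_barrier_def)

lemma Bf_cont: "continuous_on (interior Xf) Bf"
proof (rule continuous_at_imp_continuous_on, rule ballI)
  fix x assume "x \<in> interior Xf"
  then obtain D where "GDERIV Bf x :> D" using A5a by (auto simp: recentered_barrier_def)
  then show "isCont Bf x" unfolding gderiv_def using has_derivative_continuous by blast
qed

lemma quadQ: "0 \<le> y \<bullet> (Q *v y)" using Q_psd by (simp add: psd_mat_def)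
lemma quadR: "0 \<le> v \<bullet> (R *v v)" using R_pd by (cases "v = 0") (auto simp: pd_mat_def less_imp_le)
lemma quadP: "0 \<le> y \<bullet> (P *v y)" using P_pd by (cases "y = 0") (auto simp: pd_mat_def less_imp_le)

lemma stage_ge: "y \<in> interior X \<Longrightarrow> v \<in> interior U \<Longrightarrow>
   eps * Bx y \<le> stage y v \<and> eps * Bu v \<le> stage y v \<and> v \<bullet> (R *v v) \<le> stage y v \<and> 0 \<le> stage y v"
  using bx.B_nonneg[of y] bu.B_nonneg[of v] quadQ[of y] quadR[of v] eps_pos
  unfolding stage_def bxP buP by (auto intro!: add_nonneg_nonneg mult_nonneg_nonneg)

lemma Vf_ge: "y \<in> interior Xf \<Longrightarrow> eps * Bf y \<le> Vf y \<and> 0 \<le> Vf y"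
  using Bf_facts(2)[of y] quadP[of y] eps_pos unfolding Vf_def by auto

lemma J_ge:
  assumes "sf x u"
  shows "\<forall>k<N. stage (ps x u k) (u k) \<le> J x u" "eps * Bf (ps x u N) \<le> J x u" "0 \<le> J x u"
proof -
  have st: "\<forall>k<N. 0 \<le> stage (ps x u k) (u k)" using assms stage_ge by (auto simp: strictly_feasible_def)
  have vf: "eps * Bf (ps x u N) \<le> Vf (ps x u N)" "0 \<le> Vf (ps x u N)"
    using assms Vf_ge by (auto simp: strictly_feasible_def)
  show "\<forall>k<N. stage (ps x u k) (u k) \<le> J x u"
  proof (intro allI impI)
    fix k assume k: "k < N"
    have "stage (ps x u k) (u k) \<le> (\<Sum>k<N. stage (ps x u k) (u k))"
      by (rule member_le_sum) (use k st in auto)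
    then show "stage (ps x u k) (u k) \<le> J x u" using vf by (simp add: J_split)
  qed
  have "0 \<le> (\<Sum>k<N. stage (ps x u k) (u k))" using st by (auto intro: sum_nonneg)
  then show "eps * Bf (ps x u N) \<le> J x u" "0 \<le> J x u" using vf by (auto simp: J_split)
qed

lemma terminal_ineq:
  assumes y: "y \<in> interior Xf"
  shows "stage y (K *v y) + Vf (AK *v y) \<le> Vf y"
proof -
  have yN: "y \<in> Nset" using y Xf_N interior_subset by blast
  have b: "Bx y + Bu (K *v y) \<le> y \<bullet> (M *v y)" using A2_bound yN by blast
  have f: "Bf (AK *v y) \<le> Bf y" using A5b y by auto
  have q: "y \<bullet> (P *v y) = (AK *v y) \<bullet> (P *v (AK *v y)) + (K *v y) \<bullet> (R *v (K *v y)) + y \<bullet> (Q *v y) + eps * (y \<bullet> (M *v y))"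
    by (rule P_eq_quad[OF P_eq])
  have "eps * (Bx y + Bu (K *v y)) \<le> eps * (y \<bullet> (M *v y))" using b eps_pos by simp
  moreover have "eps * Bf (AK *v y) \<le> eps * Bf y" using f eps_pos by simp
  ultimately show ?thesis unfolding stage_def Vf_def q by (simp add: algebra_simps)
qed

lemma AK_mult: "AK *v y = A *v y + B *v (K *v y)"
  by (simp add: matrix_vector_mult_add_rdistrib matrix_vector_mul_assoc)

lemma int_Xf_sub: "y \<in> interior Xf \<Longrightarrow> y \<in> interior X \<and> K *v y \<in> interior U"
  using A2_bound Xf_N interior_subset by blast

lemma shift:
  assumes sfu: "sf x u"
  defines "us \<equiv> (\<lambda>k. if Suc k < N then u (Suc k) else K *v ps x u N)"
  shows "sf (ps x u 1) us \<and> J (ps x u 1) us \<le> J x u - stage x (u 0)"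
proof -
  obtain n where n: "N = Suc n" using N_ge1 by (cases N) auto
  have pk: "k < N \<Longrightarrow> ps (ps x u 1) us k = ps x u (Suc k)" for k
  proof (induction k)
    case 0 then show ?case by simp
  next
    case (Suc k)
    then have "us k = u (Suc k)" by (simp add: us_def)
    then show ?case using Suc by simp
  qed
  have pN: "ps (ps x u 1) us N = AK *v ps x u N"
  proof -
    have "ps (ps x u 1) us N = A *v ps x u N + B *v us n" using pk[of n] n by simp
    also have "us n = K *v ps x u N" using n by (simp add: us_def)
    finally show ?thesis by (simp add: AK_mult)
  qed
  have xN: "ps x u N \<in> interior Xf" using sfu by (simp add: strictly_feasible_def)
  have sf1: "sf (ps x u 1) us"
    unfolding strictly_feasible_def
  proof (intro conjI allI impI)
    fix k assume k: "k < N"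
    show "us k \<in> interior U"
      using sfu int_Xf_sub[OF xN] k by (auto simp: us_def strictly_feasible_def)
    show "ps (ps x u 1) us k \<in> interior X"
    proof (cases "Suc k < N")
      case True
      have "ps x u (Suc k) \<in> interior X" using sfu True unfolding strictly_feasible_def by blast
      then show ?thesis using pk[OF k] by simp
    next
      case False then have "Suc k = N" using k by simp
      then show ?thesis using pk[OF k] int_Xf_sub[OF xN] by simp
    qed
  next
    show "ps (ps x u 1) us N \<in> interior Xf" using pN A5b xN by simp
  qed
  have "J (ps x u 1) us = (\<Sum>k<n. stage (ps x u (Suc k)) (u (Suc k))) + stage (ps x u N) (K *v ps x u N) + Vf (AK *v ps x u N)"
  proof -
    have "(\<Sum>k<N. stage (ps (ps x u 1) us k) (us k)) = (\<Sum>k<n. stage (ps (ps x u 1) us k) (us k)) + stage (ps (ps x u 1) us n) (us n)"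
      using n by simp
    also have "(\<Sum>k<n. stage (ps (ps x u 1) us k) (us k)) = (\<Sum>k<n. stage (ps x u (Suc k)) (u (Suc k)))"
    proof (rule sum.cong[OF refl])
      fix k assume "k \<in> {..<n}"
      then have k: "k < N" "Suc k < N" using n by auto
      have eq: "us k = u (Suc k)" using k by (simp add: us_def)
      show "stage (ps (ps x u 1) us k) (us k) = stage (ps x u (Suc k)) (u (Suc k))"
        by (simp only: pk[OF k(1)] eq)
    qed
    also have "stage (ps (ps x u 1) us n) (us n) = stage (ps x u N) (K *v ps x u N)"
    proof -
      have eq: "us n = K *v ps x u N" using n by (simp add: us_def)
      show ?thesis using n by (simp only: pk eq lessI)
    qed
    finally show ?thesis using pN by (simp add: J_split)
  qed
  also have "\<dots> \<le> (\<Sum>k<n. stage (ps x u (Suc k)) (u (Suc k))) + Vf (ps x u N)"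
    using terminal_ineq[OF xN] by simp
  also have "\<dots> = J x u - stage x (u 0)"
  proof -
    have "(\<Sum>k<N. stage (ps x u k) (u k)) = (\<Sum>k<n. stage (ps x u (Suc k)) (u (Suc k))) + stage x (u 0)"
      unfolding n sum.lessThan_Suc_shift by simp
    then show ?thesis by (simp add: J_split)
  qed
  finally show ?thesis using sf1 by simp
qed

lemma terminal_candidate:
  assumes x: "x \<in> interior Xf"
  shows "\<exists>u. sf x u \<and> J x u \<le> Vf x"
proof -
  define tr where "tr k = (((*v) AK) ^^ k) x" for k
  define u where "u k = K *v tr k" for k
  have trI: "tr k \<in> interior Xf" for k
    by (induction k) (use x A5b in \<open>auto simp: tr_def\<close>)
  have pst: "ps x u k = tr k" for k
    by (induction k) (auto simp: tr_def u_def AK_mult)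
  have sfu: "sf x u"
    using trI int_Xf_sub by (auto simp: strictly_feasible_def pst u_def)
  have "(\<Sum>k<n. stage (tr k) (u k)) + Vf (tr n) \<le> Vf x" for n
  proof (induction n)
    case 0 then show ?case by (simp add: tr_def)
  next
    case (Suc n)
    have "tr (Suc n) = AK *v tr n" by (simp add: tr_def)
    then have "stage (tr n) (u n) + Vf (tr (Suc n)) \<le> Vf (tr n)"
      using terminal_ineq[OF trI[of n]] by (simp add: u_def)
    then show ?case using Suc by simp
  qed
  then have "J x u \<le> Vf x" by (simp add: J_split pst)
  then show ?thesis using sfu by blast
qed

lemma sf_open: "open {x. sf x u}"
proof (cases "\<forall>k<N. u k \<in> interior U")
  case True
  have "{x. sf x u} = (\<Inter>k\<in>{..<N}. (\<lambda>x. ps x u k) -` interior X) \<inter> (\<lambda>x. ps x u N) -` interior Xf"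
    using True by (auto simp: strictly_feasible_def)
  moreover have "open ((\<Inter>k\<in>{..<N}. (\<lambda>x. ps x u k) -` interior X) \<inter> (\<lambda>x. ps x u N) -` interior Xf)"
    by (intro open_Int open_INT finite_lessThan ballI open_vimage open_interior ps_cont)
  ultimately show ?thesis by simp
next
  case False
  then have "{x. sf x u} = {}" by (auto simp: strictly_feasible_def)
  then show ?thesis by simp
qed

lemma sf_XN: assumes "sf x u" shows "x \<in> XN"
proof -
  have s: "\<forall>k<N. u k \<in> interior U \<and> ps x u k \<in> interior X" "ps x u N \<in> interior Xf"
    using assms unfolding strictly_feasible_def by auto
  have a1: "\<forall>k<N. u k \<in> U \<and> ps x u k \<in> X"
    using s(1) interior_subset by (meson subsetD)
  have a2: "ps x u N \<in> Xf" using s(2) interior_subset by (meson subsetD)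
  have "0 < N" using N_ge1 by simp
  then have "ps x u 0 \<in> X" using a1 by blast
  then have "x \<in> X" by simp
  then show ?thesis unfolding feasible_set_def using a1 a2 by (intro CollectI conjI exI[of _ u])
qed

lemma sf_intXN: "sf x u \<Longrightarrow> x \<in> interior XN"
proof -
  assume "sf x u"
  moreover have "{x. sf x u} \<subseteq> interior XN"
    using sf_open sf_XN by (intro interior_maximal) auto
  ultimately show ?thesis by blast
qed

lemma sf_zero: "sf 0 (\<lambda>k. 0)"
proof -
  have p: "ps 0 (\<lambda>k. 0) k = 0" for k by (induction k) auto
  have "0 \<in> interior X" "0 \<in> interior U" using bx.zero_int bu.zero_int bxP buP by auto
  then show ?thesis using p Bf_facts(1) unfolding strictly_feasible_def by simp
qed

lemma shrink: fixes S :: "'a::euclidean_space set" assumes "convex S" "0 \<in> interior S" "y \<in> S" "0 < l" "l < 1"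
  shows "l *\<^sub>R y \<in> interior S"
  using mem_interior_convex_shrink[OF assms(1,2,3), of "1 - l"] assms(4,5) by (simp add: algebra_simps)

lemma sf_exists: assumes x: "x \<in> interior XN" shows "\<exists>u. sf x u"
proof -
  obtain e where e: "e > 0" "ball x e \<subseteq> XN" using x by (meson mem_interior)
  define t where "t = e / (2 * (norm x + 1))"
  have np: "0 < 2 * (norm x + 1)" by (smt (verit) norm_ge_zero)
  then have t: "t > 0" using e(1) unfolding t_def by (intro divide_pos_pos)
  define x' where "x' = (1 + t) *\<^sub>R x"
  have "dist x x' = t * norm x" using t by (simp add: x'_def dist_norm algebra_simps)
  also have "\<dots> < e"
  proof -
    have "t * norm x \<le> t * (norm x + 1)" using t by simp
    also have "\<dots> = e / 2" using np by (simp add: t_def field_simps)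
    finally show ?thesis using e by simp
  qed
  finally have "x' \<in> XN" using e by auto
  then obtain u' where u': "\<forall>k<N. u' k \<in> U \<and> ps x' u' k \<in> X" "ps x' u' N \<in> Xf"
    by (auto simp: feasible_set_def)
  define l where "l = 1 / (1 + t)"
  have l: "0 < l" "l < 1" using t by (auto simp: l_def)
  have xl: "x = l *\<^sub>R x'" using t by (simp add: l_def x'_def)
  define u where "u k = l *\<^sub>R u' k" for k
  have pu: "ps x u k = l *\<^sub>R ps x' u' k" for k
    unfolding xl u_def by (rule ps_scale)
  have "sf x u"
    unfolding strictly_feasible_def pu
  proof (intro conjI allI impI)
    fix k assume k: "k < N"
    show "u k \<in> interior U" unfolding u_def
      by (rule shrink[OF convex_polytope _ _ l]) (use bu.zero_int buP u' k in auto)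
    show "l *\<^sub>R ps x' u' k \<in> interior X"
      by (rule shrink[OF convex_polytope _ _ l]) (use bx.zero_int bxP u' k in auto)
  next
    show "l *\<^sub>R ps x' u' N \<in> interior Xf"
      by (rule shrink[OF Xf_convex _ _ l]) (use Bf_facts(1) u' in auto)
  qed
  then show ?thesis by blast
qed

lemma ps_tendsto:
  assumes "\<forall>k. (\<lambda>j. s j k) \<longlonglongrightarrow> l k"
  shows "(\<lambda>j. ps x (s j) k) \<longlonglongrightarrow> ps x l k"
proof (induction k)
  case (Suc k)
  have a: "(\<lambda>j. A *v ps x (s j) k) \<longlonglongrightarrow> A *v ps x l k"
    by (rule isCont_tendsto_compose[OF matrix_vector_mult_linear_continuous_at Suc])
  have b: "(\<lambda>j. B *v s j k) \<longlonglongrightarrow> B *v l k"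
    by (rule isCont_tendsto_compose[OF matrix_vector_mult_linear_continuous_at assms[rule_format]])
  show ?case using tendsto_add[OF a b] by simp
qed simp

lemma mv_tendsto: "(f \<longlongrightarrow> a) F \<Longrightarrow> ((\<lambda>j. (G::real^'a::finite^'b::finite) *v f j) \<longlongrightarrow> G *v a) F"
  by (rule isCont_tendsto_compose[OF matrix_vector_mult_linear_continuous_at])

lemma cont_int_tendsto:
  fixes g :: "'a::metric_space \<Rightarrow> 'b::metric_space"
  assumes "continuous_on (interior S) g" "y \<in> interior S" "f \<longlonglongrightarrow> y"
  shows "(\<lambda>j. g (f j)) \<longlonglongrightarrow> g y"
proof -
  have "isCont g y" using assms(1,2) continuous_on_eq_continuous_at open_interior by blast
  then show ?thesis using isCont_tendsto_compose assms(3) by blast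
qed

lemma J_tendsto:
  assumes sfl: "sf x l" and pw: "\<forall>k. (\<lambda>j. s j k) \<longlonglongrightarrow> l k"
  shows "(\<lambda>j. J x (s j)) \<longlonglongrightarrow> J x l"
proof -
  have pst: "\<And>k. (\<lambda>j. ps x (s j) k) \<longlonglongrightarrow> ps x l k" using ps_tendsto[OF pw] .
  have st: "(\<lambda>j. stage (ps x (s j) k) (s j k)) \<longlonglongrightarrow> stage (ps x l k) (l k)" if k: "k < N" for k
  proof -
    have bx: "(\<lambda>j. Bx (ps x (s j) k)) \<longlonglongrightarrow> Bx (ps x l k)"
      by (rule cont_int_tendsto[OF bx.B_cont _ pst]) (use sfl k bxP in \<open>auto simp: strictly_feasible_def\<close>)
    have bu: "(\<lambda>j. Bu (s j k)) \<longlonglongrightarrow> Bu (l k)"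
      by (rule cont_int_tendsto[OF bu.B_cont _ pw[rule_format]]) (use sfl k buP in \<open>auto simp: strictly_feasible_def\<close>)
    show ?thesis unfolding stage_def
      by (intro tendsto_add tendsto_inner mv_tendsto pst pw[rule_format] tendsto_mult_left bx bu)
  qed
  have bf: "(\<lambda>j. Bf (ps x (s j) N)) \<longlonglongrightarrow> Bf (ps x l N)"
    by (rule cont_int_tendsto[OF Bf_cont _ pst]) (use sfl in \<open>auto simp: strictly_feasible_def\<close>)
  have "(\<lambda>j. (\<Sum>k<N. stage (ps x (s j) k) (s j k)) + Vf (ps x (s j) N)) \<longlonglongrightarrow>
        (\<Sum>k<N. stage (ps x l k) (l k)) + Vf (ps x l N)"
    unfolding Vf_def
    by (intro tendsto_add tendsto_sum tendsto_inner mv_tendsto pst tendsto_mult_left bf st) auto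
  then show ?thesis by (simp add: J_split)
qed

lemma pw_tendsto:
  fixes s :: "nat \<Rightarrow> nat \<Rightarrow> 'b::metric_space"
  shows "(s \<longlonglongrightarrow> l) \<Longrightarrow> (\<lambda>j. s j k) \<longlonglongrightarrow> l k"
proof -
  assume a: "s \<longlonglongrightarrow> l"
  have "isCont (\<lambda>x. x k) l"
    using continuous_on_product_coordinates[of k] continuous_on_eq_continuous_at open_UNIV by blast
  then show ?thesis using isCont_tendsto_compose[OF _ a] by blast
qed

lemma tr_eq:
  defines "tr \<equiv> (\<lambda>u k. if k < N then u k else (0::real^'m))"
  shows "sf x (tr u) = sf x u" "J x (tr u) = J x u"
proof -
  have p: "k \<le> N \<Longrightarrow> ps x (tr u) k = ps x u k" for k
    by (rule ps_cong) (auto simp: tr_def)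
  have t: "k < N \<Longrightarrow> tr u k = u k" for k by (simp add: tr_def)
  show "sf x (tr u) = sf x u" unfolding strictly_feasible_def using p t by auto
  show "J x (tr u) = J x u" unfolding J_split using p t by (auto intro!: sum.cong)
qed

lemma ev_contra: "eventually Pe sequentially \<Longrightarrow> (\<And>j. Pe j \<Longrightarrow> False) \<Longrightarrow> False"
  by (meson eventually_sequentially order.refl)

lemma min_exists:
  assumes u0: "sf x u0"
  shows "\<exists>u. is_barrier_minimizer A B X U Xf Q R P eps Bx Bu Bf N x u"
proof -
  define tr where "tr = (\<lambda>(u::nat \<Rightarrow> real^'m) k. if k < N then u k else 0)"
  define F where "F = (\<lambda>k::nat. if k < N then U else {0::real^'m})"
  define T where "T = Pi UNIV F"
  define c0 where "c0 = J x (tr u0)"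
  define L where "L = {u \<in> T. sf x u \<and> J x u \<le> c0}"
  have sftr: "sf x (tr u) = sf x u" "J x (tr u) = J x u" for u
    using tr_eq unfolding tr_def by auto
  have trT: "tr u \<in> T" if "sf x u" for u
  proof -
    have a: "\<forall>k<N. u k \<in> interior U" using that by (simp add: strictly_feasible_def)
    have "\<forall>k<N. u k \<in> U" using a interior_subset by blast
    then show ?thesis by (auto simp: T_def F_def tr_def)
  qed
  have u0L: "tr u0 \<in> L" using trT[OF u0] sftr u0 by (simp add: L_def c0_def)
  have Fc: "closed (F k)" "compact (F k)" for k
    using U_compact by (auto simp: F_def compact_imp_closed)
  have compT: "compact T"
  proof -
    have "compactin (product_topology (\<lambda>i. euclidean) UNIV) (Pi\<^sub>E UNIV F)"
      using Fc by (simp add: compactin_PiE)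
    then show ?thesis unfolding T_def PiE_UNIV_domain euclidean_product_topology by simp
  qed
  have M: "M0 \<le> c0" if "sf x u" "J x u \<le> c0" "M0 \<le> J x u" for u M0 using that by simp
  have closedL: "closed L"
    unfolding closed_sequential_limits
  proof (intro allI impI, elim conjE)
    fix s l assume sL: "\<forall>n. s n \<in> L" and lim: "s \<longlonglongrightarrow> l"
    have pw: "\<forall>k. (\<lambda>j. s j k) \<longlonglongrightarrow> l k" using pw_tendsto[OF lim] by blast
    have sfs: "\<And>j. sf x (s j)" and Js: "\<And>j. J x (s j) \<le> c0" using sL by (auto simp: L_def)
    have lT: "l \<in> T" unfolding T_def
    proof (rule Pi_I)
      fix k
      have "s n k \<in> F k" for n using sL by (auto simp: L_def T_def)
      then show "l k \<in> F k"
        using closed_sequentially[OF Fc(1) _ pw[rule_format]] by blast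
    qed
    have pst: "\<And>k. (\<lambda>j. ps x (s j) k) \<longlonglongrightarrow> ps x l k" using ps_tendsto[OF pw] .
    define Mb where "Mb = c0 / eps + 1"
    have big: "eps * b \<le> c0 \<Longrightarrow> Mb \<le> b \<Longrightarrow> False" for b
      using eps_pos by (simp add: Mb_def field_simps)
    have sfl: "sf x l"
      unfolding strictly_feasible_def
    proof (intro conjI allI impI)
      fix k assume k: "k < N"
      show "l k \<in> interior U"
      proof (rule ccontr)
        assume "l k \<notin> interior U"
        then have "eventually (\<lambda>j. Mb \<le> Bu (s j k)) sequentially"
          using bu.B_blowup[OF _ pw[rule_format]] sfs k buP by (auto simp: strictly_feasible_def)
        then show False
        proof (rule ev_contra)
          fix j assume "Mb \<le> Bu (s j k)"
          moreover have "eps * Bu (s j k) \<le> c0"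
            using J_ge(1)[OF sfs[of j]] stage_ge Js[of j] k sfs[of j]
            by (meson order.trans strictly_feasible_def)
          ultimately show False using big by blast
        qed
      qed
      show "ps x l k \<in> interior X"
      proof (rule ccontr)
        assume "ps x l k \<notin> interior X"
        then have "eventually (\<lambda>j. Mb \<le> Bx (ps x (s j) k)) sequentially"
          using bx.B_blowup[OF _ pst] sfs k bxP by (auto simp: strictly_feasible_def)
        then show False
        proof (rule ev_contra)
          fix j assume "Mb \<le> Bx (ps x (s j) k)"
          moreover have "eps * Bx (ps x (s j) k) \<le> c0"
            using J_ge(1)[OF sfs[of j]] stage_ge Js[of j] k sfs[of j]
            by (meson order.trans strictly_feasible_def)
          ultimately show False using big by blast
        qed
      qed
    next
      show "ps x l N \<in> interior Xf"
      proof (rule ccontr)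
        assume ni: "ps x l N \<notin> interior Xf"
        have inXf: "ps x (s j) N \<in> interior Xf" for j using sfs[of j] by (simp add: strictly_feasible_def)
        have "ps x l N \<in> Xf"
          using closed_sequentially[OF compact_imp_closed[OF Xf_compact] _ pst] inXf interior_subset by blast
        then have fr: "ps x l N \<in> frontier Xf" using ni closure_subset by (auto simp: frontier_def)
        have "filterlim (\<lambda>j. ps x (s j) N) (at (ps x l N) within interior Xf) sequentially"
          unfolding filterlim_at
        proof (intro conjI)
          have "\<forall>j. ps x (s j) N \<in> interior Xf \<and> ps x (s j) N \<noteq> ps x l N" using inXf ni by metis
          then show "\<forall>\<^sub>F j in sequentially. ps x (s j) N \<in> interior Xf \<and> ps x (s j) N \<noteq> ps x l N"
            by (intro always_eventually) blast
          show "(\<lambda>j. ps x (s j) N) \<longlonglongrightarrow> ps x l N" by (rule pst)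
        qed
        then have "filterlim (\<lambda>j. Bf (ps x (s j) N)) at_top sequentially"
          using filterlim_compose[OF Bf_facts(4)[OF fr]] by blast
        then have "eventually (\<lambda>j. Mb \<le> Bf (ps x (s j) N)) sequentially"
          by (simp add: filterlim_at_top)
        then show False
        proof (rule ev_contra)
          fix j assume "Mb \<le> Bf (ps x (s j) N)"
          moreover have "eps * Bf (ps x (s j) N) \<le> c0" using J_ge(2)[OF sfs[of j]] Js[of j] by simp
          ultimately show False using big by blast
        qed
      qed
    qed
    have "J x l \<le> c0"
      using LIMSEQ_le_const2[OF J_tendsto[OF sfl pw]] Js by blast
    then show "l \<in> L" using lT sfl by (simp add: L_def)
  qed
  have compL: "compact L"
  proof -
    have "L = L \<inter> T" by (auto simp: L_def)
    then show ?thesis using closed_Int_compact[OF closedL compT] by simp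
  qed
  have contL: "continuous_on L (J x)"
  proof (rule continuous_on_sequentiallyI)
    fix s a assume a: "\<forall>n. s n \<in> L" "a \<in> L" "s \<longlonglongrightarrow> a"
    have "sf x a" using a(2) by (simp add: L_def)
    moreover have "\<forall>k. (\<lambda>j. s j k) \<longlonglongrightarrow> a k" using pw_tendsto[OF a(3)] by blast
    ultimately show "(\<lambda>n. J x (s n)) \<longlonglongrightarrow> J x a" by (rule J_tendsto)
  qed
  obtain us where us: "us \<in> L" "\<forall>v\<in>L. J x us \<le> J x v"
    using continuous_attains_inf[OF compL _ contL] u0L by blast
  show ?thesis
    unfolding is_barrier_minimizer_def
  proof (intro exI[of _ us] conjI allI impI)
    show "sf x us" using us by (simp add: L_def)
    fix v assume v: "sf x v"
    show "J x us \<le> J x v"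
    proof (cases "J x v \<le> c0")
      case True
      then have "tr v \<in> L" using trT[OF v] sftr v by (simp add: L_def)
      then show ?thesis using us sftr by force
    next
      case False then show ?thesis using us by (auto simp: L_def)
    qed
  qed
qed

lemma Vf_cont: "continuous_on (interior Xf) Vf"
proof -
  have "continuous_on (interior Xf) (\<lambda>y. y \<bullet> (P *v y))"
    by (intro continuous_intros)
  then show ?thesis unfolding Vf_def[abs_def]
    using Bf_cont by (intro continuous_intros) auto
qed

lemma closed_loop:
  assumes mins: "\<forall>x\<in>interior XN. is_barrier_minimizer A B X U Xf Q R P eps Bx Bu Bf N x (uopt x)"
  defines "f \<equiv> (\<lambda>x. A *v x + B *v uopt x 0)"
  shows "(\<forall>x0\<in>interior XN. \<forall>k. (f ^^ k) x0 \<in> interior XN \<and> (f ^^ k) x0 \<in> interior X \<and>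
                     uopt ((f ^^ k) x0) 0 \<in> interior U) \<and> asymptotically_stable_on f (interior XN)"
proof -
  define V where "V x = J x (uopt x)" for x
  have sfo: "sf x (uopt x)" if "x \<in> interior XN" for x
    using mins that by (simp add: is_barrier_minimizer_def)
  have minV: "V x \<le> J x v" if "x \<in> interior XN" "sf x v" for x v
    using mins that by (simp add: is_barrier_minimizer_def V_def)
  have N0: "0 < N" using N_ge1 by simp
  have inX: "x \<in> interior X \<and> uopt x 0 \<in> interior U" if "x \<in> interior XN" for x
    using sfo[OF that] N0 by (auto simp: strictly_feasible_def)
  have Vlow: "eps * Bx x \<le> V x" if x: "x \<in> interior XN" for x
  proof -
    have "stage (ps x (uopt x) 0) (uopt x 0) \<le> V x" using J_ge(1)[OF sfo[OF x], rule_format, OF N0] by (simp add: V_def)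
    then show ?thesis using stage_ge[of x "uopt x 0"] inX[OF x] by simp
  qed
  have Vnn: "0 \<le> V x" if "x \<in> interior XN" for x
    using J_ge(3)[OF sfo[OF that]] by (simp add: V_def)
  have step: "f x \<in> interior XN \<and> V (f x) \<le> V x - eps * Bx x" if x: "x \<in> interior XN" for x
  proof -
    have fx: "f x = ps x (uopt x) 1" by (simp add: f_def)
    obtain us where us: "sf (f x) us" "J (f x) us \<le> V x - stage x (uopt x 0)"
      using shift[OF sfo[OF x]] unfolding fx V_def by blast
    have fi: "f x \<in> interior XN" using sf_intXN[OF us(1)] .
    have "V (f x) \<le> V x - stage x (uopt x 0)" using minV[OF fi us(1)] us(2) by simp
    moreover have "eps * Bx x \<le> stage x (uopt x 0)" using stage_ge inX[OF x] by blast
    ultimately show ?thesis using fi by simp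
  qed
  have traj: "(f ^^ k) x0 \<in> interior XN" if "x0 \<in> interior XN" for x0 k
    by (induction k) (use that step in auto)
  have Vmono: "V ((f ^^ k) x0) \<le> V x0" if x0: "x0 \<in> interior XN" for x0 k
  proof (induction k)
    case (Suc k)
    have "V ((f ^^ Suc k) x0) \<le> V ((f ^^ k) x0) - eps * Bx ((f ^^ k) x0)"
      using step[OF traj[OF x0]] by simp
    moreover have "0 \<le> eps * Bx ((f ^^ k) x0)"
      using eps_pos bx.B_nonneg inX[OF traj[OF x0]] bxP by simp
    ultimately show ?case using Suc by simp
  qed simp
  have VVf: "V x \<le> Vf x" if x: "x \<in> interior Xf" for x
  proof -
    obtain u where u: "sf x u" "J x u \<le> Vf x" using terminal_candidate[OF x] by blast
    show ?thesis using minV[OF sf_intXN[OF u(1)] u(1)] u(2) by simp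
  qed
  have Vf0: "Vf 0 = 0" using Bf_facts(3) by (simp add: Vf_def)
  have z0: "0 \<in> interior XN" using sf_intXN[OF sf_zero] .
  have f0: "f 0 = 0"
  proof -
    have "V 0 \<le> 0" using VVf[OF Bf_facts(1)] Vf0 by simp
    moreover have "stage 0 (uopt 0 0) \<le> V 0"
      using J_ge(1)[OF sfo[OF z0], rule_format, OF N0] by (simp add: V_def)
    moreover have "uopt 0 0 \<bullet> (R *v uopt 0 0) \<le> stage 0 (uopt 0 0)"
      using stage_ge inX[OF z0] by blast
    ultimately have "uopt 0 0 \<bullet> (R *v uopt 0 0) \<le> 0" by simp
    then have "uopt 0 0 = 0" using R_pd unfolding pd_mat_def by (meson not_le)
    then show ?thesis by (simp add: f_def)
  qed
  have pd: "\<exists>m>0. \<forall>z\<in>interior XN. e \<le> norm z \<longrightarrow> eps * m \<le> V z" if e: "e > 0" for e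
  proof -
    obtain m where m: "m > 0" "\<forall>z\<in>interior X. e \<le> norm z \<longrightarrow> m \<le> Bx z"
      using bx.B_pd[OF e] bxP by auto
    show ?thesis
    proof (intro exI[of _ m] conjI m(1) ballI impI)
      fix z assume z: "z \<in> interior XN" "e \<le> norm z"
      then have "m \<le> Bx z" using m inX by blast
      then have "eps * m \<le> eps * Bx z" using eps_pos by simp
      then show "eps * m \<le> V z" using Vlow[OF z(1)] by simp
    qed
  qed
  have stable: "\<exists>\<delta>>0. \<forall>x\<in>interior XN. norm x < \<delta> \<longrightarrow> (\<forall>k. norm ((f ^^ k) x) < e)" if e: "e > 0" for e
  proof -
    obtain m where m: "m > 0" "\<forall>z\<in>interior XN. e \<le> norm z \<longrightarrow> eps * m \<le> V z" using pd[OF e] by blast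
    have "isCont Vf 0"
      using Vf_cont Bf_facts(1) continuous_on_eq_continuous_at open_interior by blast
    then obtain d1 where d1: "d1 > 0" "\<forall>x. dist x 0 < d1 \<longrightarrow> dist (Vf x) (Vf 0) < eps * m"
      unfolding continuous_at_eps_delta using m(1) eps_pos by (meson mult_pos_pos)
    obtain d2 where d2: "d2 > 0" "ball 0 d2 \<subseteq> interior Xf"
      using Bf_facts(1) open_contains_ball open_interior by blast
    show ?thesis
    proof (intro exI[of _ "min d1 d2"] conjI ballI impI allI)
      show "0 < min d1 d2" using d1 d2 by simp
      fix x k assume x: "x \<in> interior XN" "norm x < min d1 d2"
      have xf: "x \<in> interior Xf" using d2 x by auto
      have "Vf x < eps * m" using d1 x Vf0 by (auto simp: dist_norm)
      then have "V ((f ^^ k) x) < eps * m" using Vmono[OF x(1), of k] VVf[OF xf] by linarith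
      then show "norm ((f ^^ k) x) < e" using m(2) traj[OF x(1)] by (meson not_le)
    qed
  qed
  have conv: "(\<lambda>k. (f ^^ k) x0) \<longlonglongrightarrow> 0" if x0: "x0 \<in> interior XN" for x0
  proof -
    define z where "z = (\<lambda>k. (f ^^ k) x0)"
    have zi: "z k \<in> interior XN" for k using traj[OF x0] by (simp add: z_def)
    have tel: "(\<Sum>k<n. eps * Bx (z k)) \<le> V x0 - V (z n)" for n
    proof (induction n)
      case 0 then show ?case by (simp add: z_def)
    next
      case (Suc n)
      have "V (z (Suc n)) \<le> V (z n) - eps * Bx (z n)" using step[OF zi[of n]] by (simp add: z_def)
      then show ?case using Suc by simp
    qed
    have nn: "0 \<le> eps * Bx (z k)" for k using eps_pos bx.B_nonneg inX[OF zi[of k]] bxP by simp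
    have "summable (\<lambda>k. eps * Bx (z k))"
    proof (rule summableI_nonneg_bounded)
      show "0 \<le> eps * Bx (z k)" for k by (rule nn)
      show "(\<Sum>k<n. eps * Bx (z k)) \<le> V x0" for n using tel[of n] Vnn[OF zi[of n]] by simp
    qed
    then have lim0: "(\<lambda>k. eps * Bx (z k)) \<longlonglongrightarrow> 0" by (rule summable_LIMSEQ_zero)
    have "z \<longlonglongrightarrow> 0"
      unfolding LIMSEQ_iff
    proof (intro allI impI)
      fix r :: real assume r: "r > 0"
      obtain m where m: "m > 0" "\<forall>z\<in>interior XN. r \<le> norm z \<longrightarrow> eps * m \<le> V z" using pd[OF r] by blast
      obtain m' where m': "m' > 0" "\<forall>z\<in>interior X. r \<le> norm z \<longrightarrow> m' \<le> Bx z"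
        using bx.B_pd[OF r] bxP by auto
      have "eps * m' > 0" using m' eps_pos by simp
      then obtain no where no: "\<forall>n\<ge>no. norm (eps * Bx (z n) - 0) < eps * m'"
        using lim0 unfolding LIMSEQ_iff by blast
      show "\<exists>no. \<forall>n\<ge>no. norm (z n - 0) < r"
      proof (intro exI[of _ no] allI impI)
        fix n assume "n \<ge> no"
        then have "eps * Bx (z n) < eps * m'" using no nn[of n] by auto
        then have "Bx (z n) < m'" using eps_pos by simp
        then have "\<not> r \<le> norm (z n)" using m'(2) inX[OF zi[of n]] by force
        then show "norm (z n - 0) < r" by simp
      qed
    qed
    then show ?thesis by (simp add: z_def)
  qed
  show ?thesis
    unfolding asymptotically_stable_on_def
    using traj inX z0 f0 stable conv by blast
qed

end


theorem theorem1:
  fixes A :: "real^'n::finite^'n" and B :: "real^'m::finite^'n"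
    and Cx :: "real^'n^'qx::finite" and dx :: "real^'qx"
    and Cu :: "real^'m^'qu::finite" and du :: "real^'qu"
    and Q :: "real^'n^'n" and R :: "real^'m^'m" and N :: nat and eps :: real
    and K :: "real^'n^'m" and M :: "real^'n^'n" and P :: "real^'n^'n"
    and Nset :: "(real^'n) set" and Xf :: "(real^'n) set"
    and Bx :: "real^'n \<Rightarrow> real" and Bu :: "real^'m \<Rightarrow> real" and Bf :: "real^'n \<Rightarrow> real"
  defines "X \<equiv> polytope_set Cx dx"
      and "U \<equiv> polytope_set Cu du"
      and "AK \<equiv> A + B ** K"
      and "XK \<equiv> {x \<in> polytope_set Cx dx. K *v x \<in> polytope_set Cu du}"
      and "XN \<equiv> feasible_set A B (polytope_set Cx dx) (polytope_set Cu du) Xf N"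
  assumes stab: "stabilizable A B"
    and X_compact: "compact X" and U_compact: "compact U"
    and dx_pos: "\<forall>i. 0 < dx $ i" and du_pos: "\<forall>i. 0 < du $ i"
    and Q_psd: "psd_mat Q" and R_pd: "pd_mat R"
    and N_ge1: "N \<ge> 1" and eps_pos: "eps > 0"
    and K_stab: "schur_stable AK"
    \<comment> \<open>(A1)\<close>
    and A1x: "recentered_log_barrier Cx dx Bx"
    and A1u: "recentered_log_barrier Cu du Bu"
    \<comment> \<open>(A2)\<close>
    and A2_M: "psd_mat M"
    and A2_N: "convex Nset" "compact Nset" "0 \<in> interior Nset" "Nset \<subseteq> XK"
    and A2_bound: "\<forall>x\<in>Nset. x \<in> interior X \<and> K *v x \<in> interior U \<and>
                        Bx x + Bu (K *v x) \<le> x \<bullet> (M *v x)"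
    \<comment> \<open>(A3)\<close>
    and A3: "pd_mat P" "P = transpose AK ** P ** AK + transpose K ** R ** K + Q + eps *\<^sub>R M"
    \<comment> \<open>(A4)\<close>
    and A4: "convex Xf" "compact Xf" "0 \<in> Xf" "Xf \<subseteq> Nset" "\<forall>x\<in>Xf. AK *v x \<in> Xf"
    \<comment> \<open>(A5)\<close>
    and A5: "recentered_barrier Xf Bf"
            "\<forall>x\<in>interior Xf. AK *v x \<in> interior Xf \<and> Bf (AK *v x) - Bf x \<le> 0"
    and XN_int: "interior XN \<noteq> {}"
  shows "(\<forall>x\<in>interior XN. \<exists>u. is_barrier_minimizer A B X U Xf Q R P eps Bx Bu Bf N x u) \<and>
         (\<forall>uopt. (\<forall>x\<in>interior XN. is_barrier_minimizer A B X U Xf Q R P eps Bx Bu Bf N x (uopt x))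
           \<longrightarrow> (let f = (\<lambda>x. A *v x + B *v uopt x 0) in
                 (\<forall>x0\<in>interior XN. \<forall>k.
                     (f ^^ k) x0 \<in> interior XN \<and> (f ^^ k) x0 \<in> interior X \<and>
                     uopt ((f ^^ k) x0) 0 \<in> interior U) \<and>
                 asymptotically_stable_on f (interior XN)))"
proof -
  interpret m: mpc A B Cx dx Cu du Q R N eps K M P Nset Xf Bx Bu Bf
  proof (unfold_locales)
    show "\<forall>i. 0 < dx $ i" "\<forall>i. 0 < du $ i" by fact+
    show "compact (polytope_set Cx dx)" using X_compact by (simp add: X_def)
    show "compact (polytope_set Cu du)" using U_compact by (simp add: U_def)
    show "psd_mat Q" "pd_mat R" "1 \<le> N" "0 < eps" by fact+
    show "recentered_log_barrier Cx dx Bx" "recentered_log_barrier Cu du Bu" by fact+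
    show "\<forall>x\<in>Nset. x \<in> interior (polytope_set Cx dx) \<and> K *v x \<in> interior (polytope_set Cu du) \<and>
                        Bx x + Bu (K *v x) \<le> x \<bullet> (M *v x)" using A2_bound by (simp add: X_def U_def)
    show "pd_mat P" using A3(1) .
    show "P = transpose (A + B ** K) ** P ** (A + B ** K) + transpose K ** R ** K + Q + eps *\<^sub>R M"
      using A3(2) by (simp add: AK_def)
    show "convex Xf" "compact Xf" "Xf \<subseteq> Nset" using A4 by auto
    show "recentered_barrier Xf Bf" using A5(1) .
    show "\<forall>x\<in>interior Xf. (A + B ** K) *v x \<in> interior Xf \<and> Bf ((A + B ** K) *v x) - Bf x \<le> 0"
      using A5(2) by (simp add: AK_def)
  qed
  have XNe: "XN = feasible_set A B X U Xf N" by (simp add: XN_def X_def U_def)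
  have part1: "\<forall>x\<in>interior XN. \<exists>u. is_barrier_minimizer A B X U Xf Q R P eps Bx Bu Bf N x u"
    unfolding XNe X_def U_def using m.sf_exists m.min_exists by blast
  show ?thesis
  proof (intro conjI part1 allI impI)
    fix uopt
    assume "\<forall>x\<in>interior XN. is_barrier_minimizer A B X U Xf Q R P eps Bx Bu Bf N x (uopt x)"
    then show "let f = (\<lambda>x. A *v x + B *v uopt x 0) in
                 (\<forall>x0\<in>interior XN. \<forall>k.
                     (f ^^ k) x0 \<in> interior XN \<and> (f ^^ k) x0 \<in> interior X \<and>
                     uopt ((f ^^ k) x0) 0 \<in> interior U) \<and>
                 asymptotically_stable_on f (interior XN)"
      unfolding Let_def XNe X_def U_def using m.closed_loop by blast
  qed
qed

end
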